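(* Assume $\lambda\ge0$ and the weights satisfy $w_1>0$ and $w_2>0$ on ${\mathcal T}$. Let $d(\mu,\nu):=\mathrm{ET}_\lambda(\mu,\nu)+\frac{b\lambda}{2}[\mu({\mathcal T})+\nu({\mathcal T})]$. If $\mu,\nu\in{\mathcal M}({\mathcal T})$ satisfy $d(\mu,\nu)=0$, then $\mu=\nu$.
   Context: Let ${\mathcal T}$ be a tree rooted at $r$ with nonnegative edge lengths, identified with the set of its nodes and all points on its edges; $d_{\mathcal T}$ is the tree (path-length) metric. ${\mathcal M}({\mathcal T})$ is the set of nonnegative Borel measures on ${\mathcal T}$ with finite mass. Fix $b\ge0$ and weights $w_1,w_2:{\mathcal T}\to[0,\infty)$. For $\mu,\nu\in{\mathcal M}({\mathcal T})$, $\Pi_{\le}(\mu,\nu)$ is the set of nonnegative finite Borel measures $\gamma$ on ${\mathcal T}\times{\mathcal T}$ with marginals $\gamma_1\le\mu$, $\gamma_2\le\nu$, with $\gamma_1=f_1\mu$, $\gamma_2=f_2\nu$, and $\mathrm{ET}_\lambda(\mu,\nu):=\inf_{\gamma\in\Pi_\le(\mu,\nu)}\Big[\int_{\mathcal T} w_1[1-f_1]\,d\mu+\int_{\mathcal T} w_2[1-f_2]\,d\nu+b\int_{{\mathcal T}\times{\mathcal T}}[d_{\mathcal T}(x,y)-\lambda]\,\gamma(dx,dy)\Big]$. *)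

theory Defs
  imports "HOL-Analysis.Analysis"
begin

text \<open>A finite rooted metric tree: the set T (nodes and all points on edges) with the
  ambient metric dist as the tree (path-length) metric. It is a geodesic space satisfying
  the four-point (0-hyperbolicity) condition, i.e. an R-tree, spanned by the geodesic
  segments from the root r to finitely many nodes.\<close>

definition metric_segment :: "'a::metric_space \<Rightarrow> 'a \<Rightarrow> 'a set \<Rightarrow> 'a set" where
  "metric_segment x y T = {z \<in> T. dist x z + dist z y = dist x y}"

definition geodesic_on :: "'a::metric_space set \<Rightarrow> bool" where
  "geodesic_on T \<longleftrightarrow> (\<forall>x\<in>T. \<forall>y\<in>T. \<exists>\<sigma>::real \<Rightarrow> 'a.
      \<sigma> 0 = x \<and> \<sigma> (dist x y) = y \<and> \<sigma> ` {0..dist x y} \<subseteq> T \<and>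
      (\<forall>s\<in>{0..dist x y}. \<forall>t\<in>{0..dist x y}. dist (\<sigma> s) (\<sigma> t) = \<bar>s - t\<bar>))"

definition four_point_on :: "'a::metric_space set \<Rightarrow> bool" where
  "four_point_on T \<longleftrightarrow> (\<forall>x\<in>T. \<forall>y\<in>T. \<forall>z\<in>T. \<forall>w\<in>T.
      dist x y + dist z w \<le> max (dist x z + dist y w) (dist x w + dist y z))"

definition finite_rooted_metric_tree :: "'a::metric_space set \<Rightarrow> 'a \<Rightarrow> bool" where
  "finite_rooted_metric_tree T r \<longleftrightarrow> r \<in> T \<and> geodesic_on T \<and> four_point_on T \<and>
      (\<exists>N. finite N \<and> N \<subseteq> T \<and> T = (\<Union>v\<in>N. metric_segment r v T))"

text \<open>Finite nonnegative Borel measures on the tree (the whole type is the tree).\<close>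

definition finite_borel_measures :: "'a::metric_space measure set" where
  "finite_borel_measures = {\<mu>. sets \<mu> = sets borel \<and> finite_measure \<mu>}"

text \<open>Admissible partial transport plans together with the densities f1, f2 of
  their marginals with respect to mu and nu (so that gamma_1 = f1 mu <= mu, gamma_2 = f2 nu <= nu).\<close>

definition Pi_le :: "'a::metric_space measure \<Rightarrow> 'a measure \<Rightarrow>
    (('a \<times> 'a) measure \<times> ('a \<Rightarrow> real) \<times> ('a \<Rightarrow> real)) set" where
  "Pi_le \<mu> \<nu> = {(\<gamma>, f1, f2).
      sets \<gamma> = sets (borel \<Otimes>\<^sub>M borel) \<and> finite_measure \<gamma> \<and>
      f1 \<in> borel_measurable borel \<and> f2 \<in> borel_measurable borel \<and>
      (\<forall>x. 0 \<le> f1 x \<and> f1 x \<le> 1) \<and> (\<forall>x. 0 \<le> f2 x \<and> f2 x \<le> 1) \<and>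
      distr \<gamma> borel fst = density \<mu> (\<lambda>x. ennreal (f1 x)) \<and>
      distr \<gamma> borel snd = density \<nu> (\<lambda>x. ennreal (f2 x))}"

definition ET_cost :: "('a::metric_space \<Rightarrow> real) \<Rightarrow> ('a \<Rightarrow> real) \<Rightarrow> real \<Rightarrow> real \<Rightarrow>
    'a measure \<Rightarrow> 'a measure \<Rightarrow> ('a \<times> 'a) measure \<Rightarrow> ('a \<Rightarrow> real) \<Rightarrow> ('a \<Rightarrow> real) \<Rightarrow> ereal" where
  "ET_cost w1 w2 b lam \<mu> \<nu> \<gamma> f1 f2 =
     enn2ereal (\<integral>\<^sup>+ x. ennreal (w1 x * (1 - f1 x)) \<partial>\<mu>)
   + enn2ereal (\<integral>\<^sup>+ y. ennreal (w2 y * (1 - f2 y)) \<partial>\<nu>)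
   + ereal b * (enn2ereal (\<integral>\<^sup>+ p. ennreal (dist (fst p) (snd p)) \<partial>\<gamma>)
                - ereal (lam * measure \<gamma> (space \<gamma>)))"

definition ET :: "('a::metric_space \<Rightarrow> real) \<Rightarrow> ('a \<Rightarrow> real) \<Rightarrow> real \<Rightarrow> real \<Rightarrow>
    'a measure \<Rightarrow> 'a measure \<Rightarrow> ereal" where
  "ET w1 w2 b lam \<mu> \<nu> = (INF (\<gamma>, f1, f2) \<in> Pi_le \<mu> \<nu>. ET_cost w1 w2 b lam \<mu> \<nu> \<gamma> f1 f2)"

definition ET_dist :: "('a::metric_space \<Rightarrow> real) \<Rightarrow> ('a \<Rightarrow> real) \<Rightarrow> real \<Rightarrow> real \<Rightarrow>
    'a measure \<Rightarrow> 'a measure \<Rightarrow> ereal" where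
  "ET_dist w1 w2 b lam \<mu> \<nu> = ET w1 w2 b lam \<mu> \<nu>
     + ereal (b * lam / 2 * (measure \<mu> (space \<mu>) + measure \<nu> (space \<nu>)))"

end

theory Submission
  imports Defs
begin


lemma key1:
  fixes \<mu> \<nu> :: "'a::metric_space measure" and \<gamma> :: "('a \<times> 'a) measure"
    and f1 f2 w1 :: "'a \<Rightarrow> real"
  assumes s\<mu>: "sets \<mu> = sets borel" and s\<nu>: "sets \<nu> = sets borel"
    and s\<gamma>: "sets \<gamma> = sets (borel \<Otimes>\<^sub>M borel)"
    and fm: "finite_measure \<mu>" "finite_measure \<nu>" "finite_measure \<gamma>"
    and f1m: "f1 \<in> borel_measurable borel" and f2m: "f2 \<in> borel_measurable borel"
    and f1r: "\<forall>x. 0 \<le> f1 x \<and> f1 x \<le> 1" and f2r: "\<forall>x. 0 \<le> f2 x \<and> f2 x \<le> 1"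
    and m1: "distr \<gamma> borel fst = density \<mu> (\<lambda>x. ennreal (f1 x))"
    and m2: "distr \<gamma> borel snd = density \<nu> (\<lambda>x. ennreal (f2 x))"
    and C: "closed C" and dl: "\<delta> > 0" and et: "\<eta> > 0"
    and w1m: "w1 \<in> borel_measurable borel" and w1p: "\<forall>x. 0 < w1 x"
    and D: "(\<integral>\<^sup>+p. ennreal (dist (fst p) (snd p)) \<partial>\<gamma>) \<le> ennreal d" and d: "d \<ge> 0"
    and A: "(\<integral>\<^sup>+x. ennreal (w1 x * (1 - f1 x)) \<partial>\<mu>) \<le> ennreal a" and a: "a \<ge> 0"
  shows "measure \<mu> C \<le> measure \<nu> {y. infdist y C < \<delta>} + d / \<delta> + measure \<mu> {x. w1 x < \<eta>} + a / \<eta>"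
proof -
  interpret M: finite_measure \<mu> by fact
  interpret N: finite_measure \<nu> by fact
  interpret G: finite_measure \<gamma> by fact
  define U where "U = {y. infdist y C < \<delta>}"
  define W where "W = {x. w1 x < \<eta>}"
  have sp\<mu>: "space \<mu> = UNIV" using sets_eq_imp_space_eq[OF s\<mu>] by simp
  have sp\<nu>: "space \<nu> = UNIV" using sets_eq_imp_space_eq[OF s\<nu>] by simp
  have sp\<gamma>: "space \<gamma> = UNIV" using sets_eq_imp_space_eq[OF s\<gamma>] by (simp add: space_pair_measure)
  have Uo: "open U" unfolding U_def
    by (rule open_Collect_less) (auto intro: continuous_intros)
  have Ub: "U \<in> sets borel" using Uo by simp
  have Cb: "C \<in> sets borel" using C by simp
  have Wb: "W \<in> sets borel"
  proof -
    have "W = {x \<in> space borel. w1 x < \<eta>}" by (simp add: W_def)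
    also have "\<dots> \<in> sets borel" using w1m by measurable
    finally show ?thesis .
  qed
  have f1\<mu>: "f1 \<in> borel_measurable \<mu>" using f1m measurable_cong_sets[OF s\<mu> refl] by blast
  have f2\<nu>: "f2 \<in> borel_measurable \<nu>" using f2m measurable_cong_sets[OF s\<nu> refl] by blast
  have w1\<mu>: "w1 \<in> borel_measurable \<mu>" using w1m measurable_cong_sets[OF s\<mu> refl] by blast
  have fstm: "fst \<in> measurable \<gamma> borel" using measurable_fst measurable_cong_sets[OF s\<gamma> refl] by blast
  have sndm: "snd \<in> measurable \<gamma> borel" using measurable_snd measurable_cong_sets[OF s\<gamma> refl] by blast
  have CU: "C \<times> U \<in> sets \<gamma>" "C \<times> (- U) \<in> sets \<gamma>" "C \<times> UNIV \<in> sets \<gamma>" "UNIV \<times> U \<in> sets \<gamma>"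
    using Cb Ub by (auto simp: s\<gamma> intro!: pair_measureI)
  have h1: "emeasure \<mu> C = (\<integral>\<^sup>+x. ennreal (f1 x) * indicator C x \<partial>\<mu>) + (\<integral>\<^sup>+x. ennreal (1 - f1 x) * indicator C x \<partial>\<mu>)"
  proof -
    have "emeasure \<mu> C = (\<integral>\<^sup>+x. indicator C x \<partial>\<mu>)" using Cb s\<mu> by simp
    also have "\<dots> = (\<integral>\<^sup>+x. ennreal (f1 x) * indicator C x + ennreal (1 - f1 x) * indicator C x \<partial>\<mu>)"
      apply (rule nn_integral_cong)
      using f1r by (auto simp: indicator_def ennreal_plus[symmetric] simp del: ennreal_plus)
    also have "\<dots> = (\<integral>\<^sup>+x. ennreal (f1 x) * indicator C x \<partial>\<mu>) + (\<integral>\<^sup>+x. ennreal (1 - f1 x) * indicator C x \<partial>\<mu>)"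
      apply (rule nn_integral_add)
      using f1\<mu> Cb s\<mu> by measurable
    finally show ?thesis .
  qed
  have h2: "(\<integral>\<^sup>+x. ennreal (f1 x) * indicator C x \<partial>\<mu>) = emeasure \<gamma> (C \<times> UNIV)"
  proof -
    have "(\<integral>\<^sup>+x. ennreal (f1 x) * indicator C x \<partial>\<mu>) = emeasure (density \<mu> (\<lambda>x. ennreal (f1 x))) C"
      using Cb s\<mu> f1\<mu> by (simp add: emeasure_density)
    also have "\<dots> = emeasure (distr \<gamma> borel fst) C" using m1 by simp
    also have "\<dots> = emeasure \<gamma> (fst -` C \<inter> space \<gamma>)" using Cb fstm by (simp add: emeasure_distr)
    also have "fst -` C \<inter> space \<gamma> = C \<times> UNIV" using sp\<gamma> by auto
    finally show ?thesis .
  qed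
  have h3: "emeasure \<gamma> (C \<times> UNIV) = emeasure \<gamma> (C \<times> U) + emeasure \<gamma> (C \<times> (- U))"
  proof -
    have "C \<times> UNIV = (C \<times> U) \<union> (C \<times> (- U))" by auto
    moreover have "(C \<times> U) \<inter> (C \<times> (- U)) = {}" by auto
    ultimately show ?thesis using CU plus_emeasure[of "C \<times> U" \<gamma> "C \<times> (- U)"] by simp
  qed
  have h4: "emeasure \<gamma> (C \<times> U) \<le> emeasure \<nu> U"
  proof -
    have "emeasure \<gamma> (C \<times> U) \<le> emeasure \<gamma> (UNIV \<times> U)" using CU by (intro emeasure_mono) auto
    also have "UNIV \<times> U = snd -` U \<inter> space \<gamma>" using sp\<gamma> by auto
    also have "emeasure \<gamma> \<dots> = emeasure (distr \<gamma> borel snd) U" using Ub sndm by (simp add: emeasure_distr)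
    also have "\<dots> = emeasure (density \<nu> (\<lambda>x. ennreal (f2 x))) U" using m2 by simp
    also have "\<dots> = (\<integral>\<^sup>+x. ennreal (f2 x) * indicator U x \<partial>\<nu>)"
      using Ub s\<nu> f2\<nu> by (simp add: emeasure_density)
    also have "\<dots> \<le> (\<integral>\<^sup>+x. indicator U x \<partial>\<nu>)"
      apply (rule nn_integral_mono) using f2r by (auto simp: indicator_def)
    also have "\<dots> = emeasure \<nu> U" using Ub s\<nu> by simp
    finally show ?thesis .
  qed
  have h5: "ennreal \<delta> * emeasure \<gamma> (C \<times> (- U)) \<le> ennreal d"
  proof -
    have "ennreal \<delta> * emeasure \<gamma> (C \<times> (- U)) = (\<integral>\<^sup>+p. ennreal \<delta> * indicator (C \<times> (- U)) p \<partial>\<gamma>)"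
      using CU by (simp add: nn_integral_cmult_indicator)
    also have "\<dots> \<le> (\<integral>\<^sup>+p. ennreal (dist (fst p) (snd p)) \<partial>\<gamma>)"
    proof (rule nn_integral_mono)
      fix p :: "'a \<times> 'a"
      show "ennreal \<delta> * indicator (C \<times> (- U)) p \<le> ennreal (dist (fst p) (snd p))"
      proof (cases "p \<in> C \<times> (- U)")
        case True
        then have "\<delta> \<le> infdist (snd p) C" by (auto simp: U_def)
        also have "\<dots> \<le> dist (snd p) (fst p)" using True by (auto intro: infdist_le)
        finally show ?thesis using True by (simp add: dist_commute)
      qed simp
    qed
    finally show ?thesis using D by simp
  qed
  have h5': "measure \<gamma> (C \<times> (- U)) \<le> d / \<delta>"
  proof -
    have "ennreal (\<delta> * measure \<gamma> (C \<times> (- U))) \<le> ennreal d"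
      using h5 G.emeasure_eq_measure dl by (simp add: ennreal_mult)
    then have "\<delta> * measure \<gamma> (C \<times> (- U)) \<le> d" using d by (simp add: ennreal_le_iff)
    then show ?thesis using dl by (simp add: field_simps)
  qed
  have h6: "(\<integral>\<^sup>+x. ennreal (1 - f1 x) * indicator C x \<partial>\<mu>) \<le> emeasure \<mu> W + ennreal (a / \<eta>)"
  proof -
    have "(\<integral>\<^sup>+x. ennreal (1 - f1 x) * indicator C x \<partial>\<mu>) \<le>
        (\<integral>\<^sup>+x. indicator W x + ennreal (1 / \<eta>) * ennreal (w1 x * (1 - f1 x)) \<partial>\<mu>)"
    proof (rule nn_integral_mono)
      fix x
      show "ennreal (1 - f1 x) * indicator C x \<le> indicator W x + ennreal (1 / \<eta>) * ennreal (w1 x * (1 - f1 x))"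
      proof (cases "x \<in> W")
        case True
        have "ennreal (1 - f1 x) * indicator C x \<le> 1" using f1r by (auto simp: indicator_def)
        also have "(1::ennreal) \<le> 1 + ennreal (1 / \<eta>) * ennreal (w1 x * (1 - f1 x))"
          by (rule add_increasing2[OF zero_le order_refl])
        finally show ?thesis using True by simp
      next
        case False
        then have "\<eta> \<le> w1 x" by (auto simp: W_def)
        then have "\<eta> * (1 - f1 x) \<le> w1 x * (1 - f1 x)" using f1r by (intro mult_right_mono) auto
        then have "1 - f1 x \<le> 1 / \<eta> * (w1 x * (1 - f1 x))" using et
          by (simp add: field_simps)
        then have "ennreal (1 - f1 x) \<le> ennreal (1 / \<eta>) * ennreal (w1 x * (1 - f1 x))"
        proof -
          have "0 \<le> w1 x * (1 - f1 x)" using f1r w1p by (simp add: less_imp_le)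
          then show ?thesis using et \<open>1 - f1 x \<le> _\<close> by (subst ennreal_mult[symmetric]) (auto intro: ennreal_leI)
        qed
        then show ?thesis using False by (auto simp: indicator_def)
      qed
    qed
    also have "\<dots> = emeasure \<mu> W + ennreal (1 / \<eta>) * (\<integral>\<^sup>+x. ennreal (w1 x * (1 - f1 x)) \<partial>\<mu>)"
      apply (subst nn_integral_add)
      using Wb s\<mu> w1\<mu> f1\<mu> by (auto simp: nn_integral_cmult)
    also have "\<dots> \<le> emeasure \<mu> W + ennreal (1 / \<eta>) * ennreal a"
      using A by (intro add_left_mono mult_left_mono) auto
    also have "\<dots> = emeasure \<mu> W + ennreal (a / \<eta>)" using et a by (subst ennreal_mult[symmetric]) auto
    finally show ?thesis .
  qed
  have "emeasure \<mu> C \<le> emeasure \<nu> U + emeasure \<gamma> (C \<times> (- U)) + (emeasure \<mu> W + ennreal (a / \<eta>))"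
  proof -
    have "emeasure \<mu> C = emeasure \<gamma> (C \<times> U) + emeasure \<gamma> (C \<times> (- U)) + (\<integral>\<^sup>+x. ennreal (1 - f1 x) * indicator C x \<partial>\<mu>)"
      using h1 h2 h3 by simp
    also have "\<dots> \<le> emeasure \<nu> U + emeasure \<gamma> (C \<times> (- U)) + (emeasure \<mu> W + ennreal (a / \<eta>))"
      by (intro add_mono h4 h6 order_refl)
    finally show ?thesis .
  qed
  then have "ennreal (measure \<mu> C) \<le> ennreal (measure \<nu> U + measure \<gamma> (C \<times> (- U)) + (measure \<mu> W + a / \<eta>))"
    using et a by (simp add: M.emeasure_eq_measure N.emeasure_eq_measure G.emeasure_eq_measure ennreal_plus[symmetric] del: ennreal_plus)
  then have "measure \<mu> C \<le> measure \<nu> U + measure \<gamma> (C \<times> (- U)) + (measure \<mu> W + a / \<eta>)"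
    using et a by (subst (asm) ennreal_le_iff) auto
  then show ?thesis using h5' unfolding U_def W_def by linarith
qed

lemma key2:
  fixes \<mu> \<nu> :: "'a::metric_space measure" and \<gamma> :: "('a \<times> 'a) measure"
    and f1 f2 w2 :: "'a \<Rightarrow> real"
  assumes s\<mu>: "sets \<mu> = sets borel" and s\<nu>: "sets \<nu> = sets borel"
    and s\<gamma>: "sets \<gamma> = sets (borel \<Otimes>\<^sub>M borel)"
    and fm: "finite_measure \<mu>" "finite_measure \<nu>" "finite_measure \<gamma>"
    and f1m: "f1 \<in> borel_measurable borel" and f2m: "f2 \<in> borel_measurable borel"
    and f1r: "\<forall>x. 0 \<le> f1 x \<and> f1 x \<le> 1" and f2r: "\<forall>x. 0 \<le> f2 x \<and> f2 x \<le> 1"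
    and m1: "distr \<gamma> borel fst = density \<mu> (\<lambda>x. ennreal (f1 x))"
    and m2: "distr \<gamma> borel snd = density \<nu> (\<lambda>x. ennreal (f2 x))"
    and C: "closed C" and dl: "\<delta> > 0" and et: "\<eta> > 0"
    and w2m: "w2 \<in> borel_measurable borel" and w2p: "\<forall>x. 0 < w2 x"
    and D: "(\<integral>\<^sup>+p. ennreal (dist (fst p) (snd p)) \<partial>\<gamma>) \<le> ennreal d" and d: "d \<ge> 0"
    and A: "(\<integral>\<^sup>+x. ennreal (w2 x * (1 - f2 x)) \<partial>\<nu>) \<le> ennreal a" and a: "a \<ge> 0"
  shows "measure \<nu> C \<le> measure \<mu> {y. infdist y C < \<delta>} + d / \<delta> + measure \<nu> {x. w2 x < \<eta>} + a / \<eta>"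
proof -
  interpret M: finite_measure \<mu> by fact
  interpret N: finite_measure \<nu> by fact
  interpret G: finite_measure \<gamma> by fact
  define U where "U = {y. infdist y C < \<delta>}"
  define W where "W = {x. w2 x < \<eta>}"
  have sp\<gamma>: "space \<gamma> = UNIV" using sets_eq_imp_space_eq[OF s\<gamma>] by (simp add: space_pair_measure)
  have Uo: "open U" unfolding U_def
    by (rule open_Collect_less) (auto intro: continuous_intros)
  have Ub: "U \<in> sets borel" using Uo by simp
  have Cb: "C \<in> sets borel" using C by simp
  have Wb: "W \<in> sets borel"
  proof -
    have "W = {x \<in> space borel. w2 x < \<eta>}" by (simp add: W_def)
    also have "\<dots> \<in> sets borel" using w2m by measurable
    finally show ?thesis .
  qed
  have f1\<mu>: "f1 \<in> borel_measurable \<mu>" using f1m measurable_cong_sets[OF s\<mu> refl] by blast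
  have f2\<nu>: "f2 \<in> borel_measurable \<nu>" using f2m measurable_cong_sets[OF s\<nu> refl] by blast
  have w2\<nu>: "w2 \<in> borel_measurable \<nu>" using w2m measurable_cong_sets[OF s\<nu> refl] by blast
  have fstm: "fst \<in> measurable \<gamma> borel" using measurable_fst measurable_cong_sets[OF s\<gamma> refl] by blast
  have sndm: "snd \<in> measurable \<gamma> borel" using measurable_snd measurable_cong_sets[OF s\<gamma> refl] by blast
  have CU: "U \<times> C \<in> sets \<gamma>" "(- U) \<times> C \<in> sets \<gamma>" "UNIV \<times> C \<in> sets \<gamma>" "U \<times> UNIV \<in> sets \<gamma>"
    using Cb Ub by (auto simp: s\<gamma> intro!: pair_measureI)
  have h1: "emeasure \<nu> C = (\<integral>\<^sup>+x. ennreal (f2 x) * indicator C x \<partial>\<nu>) + (\<integral>\<^sup>+x. ennreal (1 - f2 x) * indicator C x \<partial>\<nu>)"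
  proof -
    have "emeasure \<nu> C = (\<integral>\<^sup>+x. indicator C x \<partial>\<nu>)" using Cb s\<nu> by simp
    also have "\<dots> = (\<integral>\<^sup>+x. ennreal (f2 x) * indicator C x + ennreal (1 - f2 x) * indicator C x \<partial>\<nu>)"
      apply (rule nn_integral_cong)
      using f2r by (auto simp: indicator_def ennreal_plus[symmetric] simp del: ennreal_plus)
    also have "\<dots> = (\<integral>\<^sup>+x. ennreal (f2 x) * indicator C x \<partial>\<nu>) + (\<integral>\<^sup>+x. ennreal (1 - f2 x) * indicator C x \<partial>\<nu>)"
      apply (rule nn_integral_add)
      using f2\<nu> Cb s\<nu> by measurable
    finally show ?thesis .
  qed
  have h2: "(\<integral>\<^sup>+x. ennreal (f2 x) * indicator C x \<partial>\<nu>) = emeasure \<gamma> (UNIV \<times> C)"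
  proof -
    have "(\<integral>\<^sup>+x. ennreal (f2 x) * indicator C x \<partial>\<nu>) = emeasure (density \<nu> (\<lambda>x. ennreal (f2 x))) C"
      using Cb s\<nu> f2\<nu> by (simp add: emeasure_density)
    also have "\<dots> = emeasure (distr \<gamma> borel snd) C" using m2 by simp
    also have "\<dots> = emeasure \<gamma> (snd -` C \<inter> space \<gamma>)" using Cb sndm by (simp add: emeasure_distr)
    also have "snd -` C \<inter> space \<gamma> = UNIV \<times> C" using sp\<gamma> by auto
    finally show ?thesis .
  qed
  have h3: "emeasure \<gamma> (UNIV \<times> C) = emeasure \<gamma> (U \<times> C) + emeasure \<gamma> ((- U) \<times> C)"
  proof -
    have "UNIV \<times> C = (U \<times> C) \<union> ((- U) \<times> C)" by auto
    moreover have "(U \<times> C) \<inter> ((- U) \<times> C) = {}" by auto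
    ultimately show ?thesis using CU plus_emeasure[of "U \<times> C" \<gamma> "(- U) \<times> C"] by simp
  qed
  have h4: "emeasure \<gamma> (U \<times> C) \<le> emeasure \<mu> U"
  proof -
    have "emeasure \<gamma> (U \<times> C) \<le> emeasure \<gamma> (U \<times> UNIV)" using CU by (intro emeasure_mono) auto
    also have "U \<times> UNIV = fst -` U \<inter> space \<gamma>" using sp\<gamma> by auto
    also have "emeasure \<gamma> \<dots> = emeasure (distr \<gamma> borel fst) U" using Ub fstm by (simp add: emeasure_distr)
    also have "\<dots> = emeasure (density \<mu> (\<lambda>x. ennreal (f1 x))) U" using m1 by simp
    also have "\<dots> = (\<integral>\<^sup>+x. ennreal (f1 x) * indicator U x \<partial>\<mu>)"
      using Ub s\<mu> f1\<mu> by (simp add: emeasure_density)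
    also have "\<dots> \<le> (\<integral>\<^sup>+x. indicator U x \<partial>\<mu>)"
      apply (rule nn_integral_mono) using f1r by (auto simp: indicator_def)
    also have "\<dots> = emeasure \<mu> U" using Ub s\<mu> by simp
    finally show ?thesis .
  qed
  have h5: "ennreal \<delta> * emeasure \<gamma> ((- U) \<times> C) \<le> ennreal d"
  proof -
    have "ennreal \<delta> * emeasure \<gamma> ((- U) \<times> C) = (\<integral>\<^sup>+p. ennreal \<delta> * indicator ((- U) \<times> C) p \<partial>\<gamma>)"
      using CU by (simp add: nn_integral_cmult_indicator)
    also have "\<dots> \<le> (\<integral>\<^sup>+p. ennreal (dist (fst p) (snd p)) \<partial>\<gamma>)"
    proof (rule nn_integral_mono)
      fix p :: "'a \<times> 'a"
      show "ennreal \<delta> * indicator ((- U) \<times> C) p \<le> ennreal (dist (fst p) (snd p))"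
      proof (cases "p \<in> (- U) \<times> C")
        case True
        then have "\<delta> \<le> infdist (fst p) C" by (auto simp: U_def)
        also have "\<dots> \<le> dist (fst p) (snd p)" using True by (auto intro: infdist_le)
        finally show ?thesis using True by simp
      qed simp
    qed
    finally show ?thesis using D by simp
  qed
  have h5': "measure \<gamma> ((- U) \<times> C) \<le> d / \<delta>"
  proof -
    have "ennreal (\<delta> * measure \<gamma> ((- U) \<times> C)) \<le> ennreal d"
      using h5 G.emeasure_eq_measure dl by (simp add: ennreal_mult)
    then have "\<delta> * measure \<gamma> ((- U) \<times> C) \<le> d" using d by (simp add: ennreal_le_iff)
    then show ?thesis using dl by (simp add: field_simps)
  qed
  have h6: "(\<integral>\<^sup>+x. ennreal (1 - f2 x) * indicator C x \<partial>\<nu>) \<le> emeasure \<nu> W + ennreal (a / \<eta>)"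
  proof -
    have "(\<integral>\<^sup>+x. ennreal (1 - f2 x) * indicator C x \<partial>\<nu>) \<le>
        (\<integral>\<^sup>+x. indicator W x + ennreal (1 / \<eta>) * ennreal (w2 x * (1 - f2 x)) \<partial>\<nu>)"
    proof (rule nn_integral_mono)
      fix x
      show "ennreal (1 - f2 x) * indicator C x \<le> indicator W x + ennreal (1 / \<eta>) * ennreal (w2 x * (1 - f2 x))"
      proof (cases "x \<in> W")
        case True
        have "ennreal (1 - f2 x) * indicator C x \<le> 1" using f2r by (auto simp: indicator_def)
        also have "(1::ennreal) \<le> 1 + ennreal (1 / \<eta>) * ennreal (w2 x * (1 - f2 x))"
          by (rule add_increasing2[OF zero_le order_refl])
        finally show ?thesis using True by simp
      next
        case False
        then have "\<eta> \<le> w2 x" by (auto simp: W_def)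
        then have "\<eta> * (1 - f2 x) \<le> w2 x * (1 - f2 x)" using f2r by (intro mult_right_mono) auto
        then have "1 - f2 x \<le> 1 / \<eta> * (w2 x * (1 - f2 x))" using et
          by (simp add: field_simps)
        then have "ennreal (1 - f2 x) \<le> ennreal (1 / \<eta>) * ennreal (w2 x * (1 - f2 x))"
        proof -
          have "0 \<le> w2 x * (1 - f2 x)" using f2r w2p by (simp add: less_imp_le)
          then show ?thesis using et \<open>1 - f2 x \<le> _\<close> by (subst ennreal_mult[symmetric]) (auto intro: ennreal_leI)
        qed
        then show ?thesis using False by (auto simp: indicator_def)
      qed
    qed
    also have "\<dots> = emeasure \<nu> W + ennreal (1 / \<eta>) * (\<integral>\<^sup>+x. ennreal (w2 x * (1 - f2 x)) \<partial>\<nu>)"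
      apply (subst nn_integral_add)
      using Wb s\<nu> w2\<nu> f2\<nu> by (auto simp: nn_integral_cmult)
    also have "\<dots> \<le> emeasure \<nu> W + ennreal (1 / \<eta>) * ennreal a"
      using A by (intro add_left_mono mult_left_mono) auto
    also have "\<dots> = emeasure \<nu> W + ennreal (a / \<eta>)" using et a by (subst ennreal_mult[symmetric]) auto
    finally show ?thesis .
  qed
  have "emeasure \<nu> C \<le> emeasure \<mu> U + emeasure \<gamma> ((- U) \<times> C) + (emeasure \<nu> W + ennreal (a / \<eta>))"
  proof -
    have "emeasure \<nu> C = emeasure \<gamma> (U \<times> C) + emeasure \<gamma> ((- U) \<times> C) + (\<integral>\<^sup>+x. ennreal (1 - f2 x) * indicator C x \<partial>\<nu>)"
      using h1 h2 h3 by simp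
    also have "\<dots> \<le> emeasure \<mu> U + emeasure \<gamma> ((- U) \<times> C) + (emeasure \<nu> W + ennreal (a / \<eta>))"
      by (intro add_mono h4 h6 order_refl)
    finally show ?thesis .
  qed
  then have "ennreal (measure \<nu> C) \<le> ennreal (measure \<mu> U + measure \<gamma> ((- U) \<times> C) + (measure \<nu> W + a / \<eta>))"
    using et a by (simp add: M.emeasure_eq_measure N.emeasure_eq_measure G.emeasure_eq_measure ennreal_plus[symmetric] del: ennreal_plus)
  then have "measure \<nu> C \<le> measure \<mu> U + measure \<gamma> ((- U) \<times> C) + (measure \<nu> W + a / \<eta>)"
    using et a by (subst (asm) ennreal_le_iff) auto
  then show ?thesis using h5' unfolding U_def W_def by linarith
qed



lemma cost_small:
  fixes \<mu> \<nu> :: "'a::metric_space measure"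
  assumes lam: "lam \<ge> 0" and b: "b > 0" and P: "(\<gamma>, f1, f2) \<in> Pi_le \<mu> \<nu>"
    and s\<mu>: "sets \<mu> = sets borel" and s\<nu>: "sets \<nu> = sets borel"
    and fm: "finite_measure \<mu>" "finite_measure \<nu>"
    and lt: "ET_cost w1 w2 b lam \<mu> \<nu> \<gamma> f1 f2 < ereal (\<epsilon> - b * lam / 2 * (measure \<mu> (space \<mu>) + measure \<nu> (space \<nu>)))"
  shows "\<exists>a a2 d. 0 \<le> a \<and> 0 \<le> a2 \<and> 0 \<le> d \<and>
     (\<integral>\<^sup>+x. ennreal (w1 x * (1 - f1 x)) \<partial>\<mu>) \<le> ennreal a \<and>
     (\<integral>\<^sup>+x. ennreal (w2 x * (1 - f2 x)) \<partial>\<nu>) \<le> ennreal a2 \<and>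
     (\<integral>\<^sup>+p. ennreal (dist (fst p) (snd p)) \<partial>\<gamma>) \<le> ennreal d \<and> a + a2 + b * d < \<epsilon>"
proof -
  interpret M: finite_measure \<mu> by fact
  interpret N: finite_measure \<nu> by fact
  have s\<gamma>: "sets \<gamma> = sets (borel \<Otimes>\<^sub>M borel)" and fg: "finite_measure \<gamma>"
    and f1m: "f1 \<in> borel_measurable borel" and f2m: "f2 \<in> borel_measurable borel"
    and f1r: "\<forall>x. 0 \<le> f1 x \<and> f1 x \<le> 1" and f2r: "\<forall>x. 0 \<le> f2 x \<and> f2 x \<le> 1"
    and m1: "distr \<gamma> borel fst = density \<mu> (\<lambda>x. ennreal (f1 x))"
    and m2: "distr \<gamma> borel snd = density \<nu> (\<lambda>x. ennreal (f2 x))"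
    using P unfolding Pi_le_def by auto
  interpret G: finite_measure \<gamma> by fact
  have sp\<mu>: "space \<mu> = UNIV" using sets_eq_imp_space_eq[OF s\<mu>] by simp
  have sp\<nu>: "space \<nu> = UNIV" using sets_eq_imp_space_eq[OF s\<nu>] by simp
  have sp\<gamma>: "space \<gamma> = UNIV" using sets_eq_imp_space_eq[OF s\<gamma>] by (simp add: space_pair_measure)
  have f1\<mu>: "f1 \<in> borel_measurable \<mu>" using f1m measurable_cong_sets[OF s\<mu> refl] by blast
  have f2\<nu>: "f2 \<in> borel_measurable \<nu>" using f2m measurable_cong_sets[OF s\<nu> refl] by blast
  have fstm: "fst \<in> measurable \<gamma> borel" using measurable_fst measurable_cong_sets[OF s\<gamma> refl] by blast
  have sndm: "snd \<in> measurable \<gamma> borel" using measurable_snd measurable_cong_sets[OF s\<gamma> refl] by blast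
  define G where "G = measure \<gamma> (space \<gamma>)"
  have G0: "0 \<le> G" unfolding G_def by simp
  have G1: "G \<le> measure \<mu> (space \<mu>)"
  proof -
    have "emeasure \<gamma> (space \<gamma>) = emeasure (distr \<gamma> borel fst) UNIV"
      using fstm by (simp add: emeasure_distr sp\<gamma>)
    also have "\<dots> = emeasure (density \<mu> (\<lambda>x. ennreal (f1 x))) UNIV" using m1 by simp
    also have "\<dots> = (\<integral>\<^sup>+x. ennreal (f1 x) * indicator UNIV x \<partial>\<mu>)"
      using f1\<mu> by (simp add: emeasure_density s\<mu>)
    also have "\<dots> \<le> (\<integral>\<^sup>+x. indicator UNIV x \<partial>\<mu>)"
      apply (rule nn_integral_mono) using f1r by (auto simp: indicator_def)
    also have "\<dots> = emeasure \<mu> (space \<mu>)" using sp\<mu> by simp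
    finally have "ennreal G \<le> ennreal (measure \<mu> (space \<mu>))"
      by (simp add: G_def G.emeasure_eq_measure M.emeasure_eq_measure)
    then show ?thesis by (simp add: ennreal_le_iff)
  qed
  have G2: "G \<le> measure \<nu> (space \<nu>)"
  proof -
    have "emeasure \<gamma> (space \<gamma>) = emeasure (distr \<gamma> borel snd) UNIV"
      using sndm by (simp add: emeasure_distr sp\<gamma>)
    also have "\<dots> = emeasure (density \<nu> (\<lambda>x. ennreal (f2 x))) UNIV" using m2 by simp
    also have "\<dots> = (\<integral>\<^sup>+x. ennreal (f2 x) * indicator UNIV x \<partial>\<nu>)"
      using f2\<nu> by (simp add: emeasure_density s\<nu>)
    also have "\<dots> \<le> (\<integral>\<^sup>+x. indicator UNIV x \<partial>\<nu>)"
      apply (rule nn_integral_mono) using f2r by (auto simp: indicator_def)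
    also have "\<dots> = emeasure \<nu> (space \<nu>)" using sp\<nu> by simp
    finally have "ennreal G \<le> ennreal (measure \<nu> (space \<nu>))"
      by (simp add: G_def G.emeasure_eq_measure N.emeasure_eq_measure)
    then show ?thesis by (simp add: ennreal_le_iff)
  qed
  define A where "A = (\<integral>\<^sup>+x. ennreal (w1 x * (1 - f1 x)) \<partial>\<mu>)"
  define B where "B = (\<integral>\<^sup>+x. ennreal (w2 x * (1 - f2 x)) \<partial>\<nu>)"
  define D where "D = (\<integral>\<^sup>+p. ennreal (dist (fst p) (snd p)) \<partial>\<gamma>)"
  define c where "c = b * lam / 2 * (measure \<mu> (space \<mu>) + measure \<nu> (space \<nu>))"
  have lt': "enn2ereal A + enn2ereal B + ereal b * (enn2ereal D - ereal (lam * G)) < ereal (\<epsilon> - c)"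
    using lt unfolding ET_cost_def A_def B_def D_def c_def G_def .
  show ?thesis
  proof (cases A)
    case (real a)
    note Aa = real
    show ?thesis
    proof (cases B)
      case (real a2)
      note Bb = real
      show ?thesis
      proof (cases D)
        case (real d)
        note Dd = real
        have "a + a2 + b * (d - lam * G) < \<epsilon> - c"
          using lt' Aa Bb Dd   by simp
        moreover have "b * lam * G \<le> c"
        proof -
          have "b * lam * G = b * lam / 2 * (G + G)" by simp
          also have "\<dots> \<le> c" unfolding c_def using b lam G1 G2
            by (intro mult_left_mono) auto
          finally show ?thesis .
        qed
        ultimately have "a + a2 + b * d < \<epsilon>" by (simp add: algebra_simps)
        then show ?thesis
          apply (rule_tac exI[of _ a])
          apply (rule_tac exI[of _ a2])
          apply (rule_tac exI[of _ d])
          using Aa[unfolded A_def] Bb[unfolded B_def] Dd[unfolded D_def] by simp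
      next
        case top
        have "enn2ereal D - ereal (lam * G) = \<infinity>" using top by simp
        then have X: "ereal b * (enn2ereal D - ereal (lam * G)) = \<infinity>" using b by simp
        have "enn2ereal A + enn2ereal B + ereal b * (enn2ereal D - ereal (lam * G)) = \<infinity>"
          unfolding X by (simp add: Aa Bb)
        then have "\<infinity> < ereal (\<epsilon> - c)" using lt' by (simp only:)
    then have False by simp
        then show ?thesis ..
      qed
    next
      case top
      have "ereal b * (enn2ereal D - ereal (lam * G)) \<noteq> - \<infinity>"
        using b by (cases "enn2ereal D") auto
      moreover have "enn2ereal A + enn2ereal B = \<infinity>" using top Aa by simp
      ultimately have "enn2ereal A + enn2ereal B + ereal b * (enn2ereal D - ereal (lam * G)) = \<infinity>" by simp
      then have "\<infinity> < ereal (\<epsilon> - c)" using lt' by (simp only:)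
    then have False by simp
      then show ?thesis ..
    qed
  next
    case top
    have "ereal b * (enn2ereal D - ereal (lam * G)) \<noteq> - \<infinity>"
      using b by (cases "enn2ereal D") auto
    moreover have "enn2ereal B \<noteq> - \<infinity>" by simp
    moreover have "enn2ereal A + enn2ereal B = \<infinity>" using top by (cases "enn2ereal B") auto
    ultimately have "enn2ereal A + enn2ereal B + ereal b * (enn2ereal D - ereal (lam * G)) = \<infinity>" by simp
    then have "\<infinity> < ereal (\<epsilon> - c)" using lt' by (simp only:)
    then have False by simp
    then show ?thesis ..
  qed
qed



lemma limit_arg:
  fixes M N :: "'a::metric_space measure" and w :: "'a \<Rightarrow> real"
  assumes fM: "finite_measure M" and fN: "finite_measure N"
    and sM: "sets M = sets borel" and sN: "sets N = sets borel"
    and C: "closed C" "C \<noteq> {}" and wm: "w \<in> borel_measurable borel" and wp: "\<forall>x. 0 < w x"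
    and step: "\<And>\<delta> \<eta>. \<delta> > 0 \<Longrightarrow> \<eta> > 0 \<Longrightarrow>
        measure N C \<le> measure M {y. infdist y C < \<delta>} + measure N {x. w x < \<eta>}"
  shows "measure N C \<le> measure M C"
proof -
  interpret M: finite_measure M by fact
  interpret N: finite_measure N by fact
  define U where "U n = {y. infdist y C < 1 / real (Suc n)}" for n
  define W where "W n = {x. w x < 1 / real (Suc n)}" for n
  have Uo: "open (U n)" for n unfolding U_def
    by (rule open_Collect_less) (auto intro: continuous_intros)
  have Ws: "W n \<in> sets borel" for n
  proof -
    have "W n = {x \<in> space borel. w x < 1 / real (Suc n)}" by (simp add: W_def)
    also have "\<dots> \<in> sets borel" using wm by measurable
    finally show ?thesis .
  qed
  have mono: "1 / real (Suc n) \<le> 1 / real (Suc m)" if "m \<le> n" for m n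
    using that by (intro divide_left_mono) auto
  have decU: "decseq U" unfolding decseq_def U_def using mono by (auto intro: less_le_trans)
  have decW: "decseq W" unfolding decseq_def W_def using mono by (auto intro: less_le_trans)
  have IU: "(\<Inter>n. U n) = C"
  proof
    show "C \<subseteq> (\<Inter>n. U n)" by (auto simp: U_def)
    show "(\<Inter>n. U n) \<subseteq> C"
    proof
      fix x assume x: "x \<in> (\<Inter>n. U n)"
      have "infdist x C = 0"
      proof (rule ccontr)
        assume "infdist x C \<noteq> 0"
        then have "0 < infdist x C" using infdist_nonneg[of x C] by linarith
        then obtain n where n: "1 / real (Suc n) < infdist x C" by (rule nat_approx_posE)
        moreover have "infdist x C < 1 / real (Suc n)" using x by (auto simp: U_def)
        ultimately show False by linarith
      qed
      then show "x \<in> C" using in_closed_iff_infdist_zero[OF C] by blast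
    qed
  qed
  have IW: "(\<Inter>n. W n) = {}"
  proof -
    have "x \<notin> (\<Inter>n. W n)" for x
    proof
      assume x: "x \<in> (\<Inter>n. W n)"
      obtain n where n: "1 / real (Suc n) < w x" using wp by (blast elim: nat_approx_posE)
      moreover have "w x < 1 / real (Suc n)" using x by (auto simp: W_def)
      ultimately show False by linarith
    qed
    then show ?thesis by blast
  qed
  have LU: "(\<lambda>n. measure M (U n)) \<longlonglongrightarrow> measure M C"
  proof -
    have "range U \<subseteq> sets M" using Uo sM by auto
    from M.finite_Lim_measure_decseq[OF this decU] show ?thesis unfolding IU .
  qed
  have LW: "(\<lambda>n. measure N (W n)) \<longlonglongrightarrow> 0"
  proof -
    have "range W \<subseteq> sets N" using Ws sN by auto
    from N.finite_Lim_measure_decseq[OF this decW] show ?thesis unfolding IW by simp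
  qed
  have "(\<lambda>n. measure M (U n) + measure N (W n)) \<longlonglongrightarrow> measure M C + 0"
    by (intro tendsto_add LU LW)
  moreover have "\<forall>n\<ge>0. measure N C \<le> measure M (U n) + measure N (W n)"
    unfolding U_def W_def by (auto intro: step)
  ultimately show ?thesis by (intro LIMSEQ_le_const) auto
qed

theorem lemmaA1:
  fixes r :: "'a::metric_space"
    and w1 w2 :: "'a \<Rightarrow> real" and b lam :: real and \<mu> \<nu> :: "'a measure"
  assumes tree: "finite_rooted_metric_tree (UNIV :: 'a set) r"
    and b: "b > 0"
    and lam: "lam \<ge> 0"
    and w1: "\<forall>x. w1 x > 0" and w2: "\<forall>x. w2 x > 0"
    and w1m: "w1 \<in> borel_measurable borel" and w2m: "w2 \<in> borel_measurable borel"
    and mu: "\<mu> \<in> finite_borel_measures" and nu: "\<nu> \<in> finite_borel_measures"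
    and d0: "ET_dist w1 w2 b lam \<mu> \<nu> = 0"
  shows "\<mu> = \<nu>"
proof -
  have s\<mu>: "sets \<mu> = sets borel" and f\<mu>: "finite_measure \<mu>"
    using mu by (auto simp: finite_borel_measures_def)
  have s\<nu>: "sets \<nu> = sets borel" and f\<nu>: "finite_measure \<nu>"
    using nu by (auto simp: finite_borel_measures_def)
  interpret M: finite_measure \<mu> by fact
  interpret N: finite_measure \<nu> by fact
  define c where "c = b * lam / 2 * (measure \<mu> (space \<mu>) + measure \<nu> (space \<nu>))"
  have ETeq: "ET w1 w2 b lam \<mu> \<nu> = ereal (- c)"
    using d0 unfolding ET_dist_def c_def by (cases "ET w1 w2 b lam \<mu> \<nu>") auto
  have small: "\<exists>\<gamma> f1 f2. (\<gamma>, f1, f2) \<in> Pi_le \<mu> \<nu> \<and> (\<exists>a a2 d. 0 \<le> a \<and> 0 \<le> a2 \<and> 0 \<le> d \<and>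
     (\<integral>\<^sup>+x. ennreal (w1 x * (1 - f1 x)) \<partial>\<mu>) \<le> ennreal a \<and>
     (\<integral>\<^sup>+x. ennreal (w2 x * (1 - f2 x)) \<partial>\<nu>) \<le> ennreal a2 \<and>
     (\<integral>\<^sup>+p. ennreal (dist (fst p) (snd p)) \<partial>\<gamma>) \<le> ennreal d \<and> a + a2 + b * d < \<epsilon>)"
    if e: "\<epsilon> > 0" for \<epsilon>
  proof -
    have "ET w1 w2 b lam \<mu> \<nu> < ereal (\<epsilon> - c)" using ETeq e by simp
    then obtain p where p: "p \<in> Pi_le \<mu> \<nu>"
      and lt: "(case p of (\<gamma>, f1, f2) \<Rightarrow> ET_cost w1 w2 b lam \<mu> \<nu> \<gamma> f1 f2) < ereal (\<epsilon> - c)"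
      unfolding ET_def by (auto simp: INF_less_iff)
    obtain \<gamma> f1 f2 where pe: "p = (\<gamma>, f1, f2)" by (cases p) auto
    have P: "(\<gamma>, f1, f2) \<in> Pi_le \<mu> \<nu>" using p pe by simp
    have "ET_cost w1 w2 b lam \<mu> \<nu> \<gamma> f1 f2 < ereal (\<epsilon> - b * lam / 2 * (measure \<mu> (space \<mu>) + measure \<nu> (space \<nu>)))"
      using lt pe unfolding c_def by simp
    from cost_small[OF lam b P s\<mu> s\<nu> f\<mu> f\<nu> this] P show ?thesis by blast
  qed
  have le1: "measure \<mu> C \<le> measure \<nu> C" if C: "closed C" for C
  proof (cases "C = {}")
    case True then show ?thesis by simp
  next
    case False
    show ?thesis
    proof (rule limit_arg[OF f\<nu> f\<mu> s\<nu> s\<mu> C False w1m w1])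
      fix \<delta> \<eta> :: real assume dl: "\<delta> > 0" and et: "\<eta> > 0"
      show "measure \<mu> C \<le> measure \<nu> {y. infdist y C < \<delta>} + measure \<mu> {x. w1 x < \<eta>}"
      proof (rule field_le_epsilon)
        fix e :: real assume e: "e > 0"
        define \<epsilon> where "\<epsilon> = e / (1 / (b * \<delta>) + 1 / \<eta>)"
        have kpos: "1 / (b * \<delta>) + 1 / \<eta> > 0" using b dl et by (intro add_pos_pos) auto
        have ep: "\<epsilon> > 0" unfolding \<epsilon>_def using e kpos by simp
        obtain \<gamma> f1 f2 a a2 d where P: "(\<gamma>, f1, f2) \<in> Pi_le \<mu> \<nu>" and ad: "0 \<le> a" "0 \<le> a2" "0 \<le> d"
          and A: "(\<integral>\<^sup>+x. ennreal (w1 x * (1 - f1 x)) \<partial>\<mu>) \<le> ennreal a"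
          and D: "(\<integral>\<^sup>+p. ennreal (dist (fst p) (snd p)) \<partial>\<gamma>) \<le> ennreal d" and sm: "a + a2 + b * d < \<epsilon>"
          using small[OF ep] by blast
        have P': "sets \<gamma> = sets (borel \<Otimes>\<^sub>M borel)" "finite_measure \<gamma>"
          "f1 \<in> borel_measurable borel" "f2 \<in> borel_measurable borel"
          "\<forall>x. 0 \<le> f1 x \<and> f1 x \<le> 1" "\<forall>x. 0 \<le> f2 x \<and> f2 x \<le> 1"
          "distr \<gamma> borel fst = density \<mu> (\<lambda>x. ennreal (f1 x))"
          "distr \<gamma> borel snd = density \<nu> (\<lambda>x. ennreal (f2 x))"
          using P unfolding Pi_le_def by auto
        have K: "measure \<mu> C \<le> measure \<nu> {y. infdist y C < \<delta>} + d / \<delta> + measure \<mu> {x. w1 x < \<eta>} + a / \<eta>"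
          by (rule key1[OF s\<mu> s\<nu> P'(1) f\<mu> f\<nu> P'(2-8) C dl et w1m w1 D ad(3) A ad(1)])
        have "b * d < \<epsilon>" using sm ad by linarith
        then have "d \<le> \<epsilon> / b" using b by (simp add: pos_le_divide_eq mult.commute)
        then have d1: "d / \<delta> \<le> \<epsilon> / b / \<delta>" using dl by (intro divide_right_mono) auto
        have "a \<le> \<epsilon>" using sm ad b by (smt (verit) mult_nonneg_nonneg)
        then have a1: "a / \<eta> \<le> \<epsilon> / \<eta>" using et by (intro divide_right_mono) auto
        have "\<epsilon> / b / \<delta> + \<epsilon> / \<eta> = \<epsilon> * (1 / (b * \<delta>) + 1 / \<eta>)" by (simp add: field_simps)
        also have "\<dots> = e" unfolding \<epsilon>_def using kpos by simp
        finally show "measure \<mu> C \<le> measure \<nu> {y. infdist y C < \<delta>} + measure \<mu> {x. w1 x < \<eta>} + e"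
          using K d1 a1 by linarith
      qed
    qed
  qed
  have le2: "measure \<nu> C \<le> measure \<mu> C" if C: "closed C" for C
  proof (cases "C = {}")
    case True then show ?thesis by simp
  next
    case False
    show ?thesis
    proof (rule limit_arg[OF f\<mu> f\<nu> s\<mu> s\<nu> C False w2m w2])
      fix \<delta> \<eta> :: real assume dl: "\<delta> > 0" and et: "\<eta> > 0"
      show "measure \<nu> C \<le> measure \<mu> {y. infdist y C < \<delta>} + measure \<nu> {x. w2 x < \<eta>}"
      proof (rule field_le_epsilon)
        fix e :: real assume e: "e > 0"
        define \<epsilon> where "\<epsilon> = e / (1 / (b * \<delta>) + 1 / \<eta>)"
        have kpos: "1 / (b * \<delta>) + 1 / \<eta> > 0" using b dl et by (intro add_pos_pos) auto
        have ep: "\<epsilon> > 0" unfolding \<epsilon>_def using e kpos by simp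
        obtain \<gamma> f1 f2 a a2 d where P: "(\<gamma>, f1, f2) \<in> Pi_le \<mu> \<nu>" and ad: "0 \<le> a" "0 \<le> a2" "0 \<le> d"
          and A: "(\<integral>\<^sup>+x. ennreal (w2 x * (1 - f2 x)) \<partial>\<nu>) \<le> ennreal a2"
          and D: "(\<integral>\<^sup>+p. ennreal (dist (fst p) (snd p)) \<partial>\<gamma>) \<le> ennreal d" and sm: "a + a2 + b * d < \<epsilon>"
          using small[OF ep] by blast
        have P': "sets \<gamma> = sets (borel \<Otimes>\<^sub>M borel)" "finite_measure \<gamma>"
          "f1 \<in> borel_measurable borel" "f2 \<in> borel_measurable borel"
          "\<forall>x. 0 \<le> f1 x \<and> f1 x \<le> 1" "\<forall>x. 0 \<le> f2 x \<and> f2 x \<le> 1"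
          "distr \<gamma> borel fst = density \<mu> (\<lambda>x. ennreal (f1 x))"
          "distr \<gamma> borel snd = density \<nu> (\<lambda>x. ennreal (f2 x))"
          using P unfolding Pi_le_def by auto
        have K: "measure \<nu> C \<le> measure \<mu> {y. infdist y C < \<delta>} + d / \<delta> + measure \<nu> {x. w2 x < \<eta>} + a2 / \<eta>"
          by (rule key2[OF s\<mu> s\<nu> P'(1) f\<mu> f\<nu> P'(2-8) C dl et w2m w2 D ad(3) A ad(2)])
        have "b * d < \<epsilon>" using sm ad by linarith
        then have "d \<le> \<epsilon> / b" using b by (simp add: pos_le_divide_eq mult.commute)
        then have d1: "d / \<delta> \<le> \<epsilon> / b / \<delta>" using dl by (intro divide_right_mono) auto
        have "a2 \<le> \<epsilon>" using sm ad b by (smt (verit) mult_nonneg_nonneg)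
        then have a1: "a2 / \<eta> \<le> \<epsilon> / \<eta>" using et by (intro divide_right_mono) auto
        have "\<epsilon> / b / \<delta> + \<epsilon> / \<eta> = \<epsilon> * (1 / (b * \<delta>) + 1 / \<eta>)" by (simp add: field_simps)
        also have "\<dots> = e" unfolding \<epsilon>_def using kpos by simp
        finally show "measure \<nu> C \<le> measure \<mu> {y. infdist y C < \<delta>} + measure \<nu> {x. w2 x < \<eta>} + e"
          using K d1 a1 by linarith
      qed
    qed
  qed
  have sig: "sets borel = sigma_sets UNIV (Collect closed)"
    by (subst borel_eq_closed) (simp add: sets_measure_of)
  show ?thesis
  proof (rule measure_eqI_generator_eq[where E = "Collect closed" and \<Omega> = UNIV and A = "\<lambda>_. UNIV"])
    show "Int_stable (Collect closed)" by (auto simp: Int_stable_def)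
    show "Collect closed \<subseteq> Pow UNIV" by simp
    show "emeasure \<mu> X = emeasure \<nu> X" if "X \<in> Collect closed" for X
      using le1[of X] le2[of X] that by (simp add: M.emeasure_eq_measure N.emeasure_eq_measure)
    show "sets \<mu> = sigma_sets UNIV (Collect closed)" using s\<mu> sig by simp
    show "sets \<nu> = sigma_sets UNIV (Collect closed)" using s\<nu> sig by simp
    show "range (\<lambda>_. UNIV) \<subseteq> Collect closed" by simp
    show "(\<Union>i. UNIV) = UNIV" by simp
    show "emeasure \<mu> UNIV \<noteq> \<infinity>" for i :: nat by simp
  qed
qed

end
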